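(* Let $A\in\mathbb{R}^{n\times n}$ be symmetric positive semi-definite and let $Q\in\mathbb{R}^{n\times k}$ have orthonormal columns ($Q^\top Q=I_k$, $k\le n$). Then for every $i=1,\ldots,k$, \[ \lambda_i(A)\;\ge\;\lambda_i\bigl(AQ(Q^\top AQ)^{\dagger}(AQ)^\top\bigr)\;\ge\;\sigma_i(AQ)\;\ge\;\lambda_i(Q^\top AQ). \]
   Context: For a symmetric matrix $B$, $\lambda_1(B)\ge\lambda_2(B)\ge\cdots$ denote its eigenvalues in non-increasing order; for any matrix $B$, $\sigma_1(B)\ge\sigma_2(B)\ge\cdots\ge0$ denote its singular values in non-increasing order. $B^{\dagger}$ is the Moore–Penrose pseudoinverse. The matrix $A\langle Q\rangle:=AQ(Q^\top AQ)^{\dagger}(AQ)^\top$ is the Nyström approximation of $A$ with respect to $Q$; the three quantities $\lambda_i(A\langle Q\rangle)$, $\sigma_i(AQ)$, $\lambda_i(Q^\top AQ)$ are the eigenvalue estimates produced by the Nyström, SVD-extract, and Rayleigh–Ritz methods respectively. In the paper $\operatorname{span}(Q)$ is intended to approximate the span of the eigenvectors of $A$ for its $k$ largest eigenvalues, but no quantitative condition on this is imposed. *)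

theory Defs
  imports "Jordan_Normal_Form.Char_Poly"
begin

(* For real symmetric matrices such a
   list exists (the characteristic polynomial splits over the reals). *)
definition eig_list :: "real mat \<Rightarrow> real list" where
  "eig_list B = (THE xs. sorted_wrt (\<ge>) xs \<and>
       char_poly B = (\<Prod>a\<leftarrow>xs. [:- a, 1:]))"

(* lambda_i(B), 1-based: lambda_1 >= lambda_2 >= ... *)
definition eigval :: "real mat \<Rightarrow> nat \<Rightarrow> real" where
  "eigval B i = eig_list B ! (i - 1)"

definition singval :: "real mat \<Rightarrow> nat \<Rightarrow> real" where
  "singval B i = sqrt (eigval (B\<^sup>T * B) i)"

definition pinv :: "real mat \<Rightarrow> real mat" where
  "pinv M = (THE X. X \<in> carrier_mat (dim_col M) (dim_row M) \<and>
       M * X * M = M \<and> X * M * X = X \<and>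
       (M * X)\<^sup>T = M * X \<and> (X * M)\<^sup>T = X * M)"

definition nystrom :: "real mat \<Rightarrow> real mat \<Rightarrow> real mat" where
  "nystrom A Q = (A * Q) * pinv (Q\<^sup>T * A * Q) * (A * Q)\<^sup>T"

end

theory Submission
  imports Defs "Jordan_Normal_Form.Schur_Decomposition"
begin

lemma real_sym_eigen:
  fixes A :: "real mat"
  assumes A: "A \<in> carrier_mat n n" and sym: "A\<^sup>T = A" and n: "n > 0"
  shows "\<exists>e v. v \<in> carrier_vec n \<and> v \<noteq> 0\<^sub>v n \<and> A *\<^sub>v v = e \<cdot>\<^sub>v v"
proof -
  define Ac where "Ac = map_mat complex_of_real A"
  have Ac: "Ac \<in> carrier_mat n n" using A by (simp add: Ac_def)
  obtain as where cp: "char_poly Ac = (\<Prod>a\<leftarrow>as. [:- a, 1:])" and len: "length as = n"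
    using char_poly_factorized[OF Ac] by blast
  define z where "z = as ! 0"
  have "z \<in> set as" using len n z_def by auto
  hence "poly (char_poly Ac) z = 0" unfolding cp
    by (induct as, auto)
  hence "eigenvalue Ac z" using eigenvalue_root_char_poly[OF Ac] by simp
  then obtain v where "eigenvector Ac v z" unfolding eigenvalue_def by blast
  hence v: "v \<in> carrier_vec n" and v0: "v \<noteq> 0\<^sub>v n" and ev: "Ac *\<^sub>v v = z \<cdot>\<^sub>v v"
    unfolding eigenvector_def using Ac by auto
  have AcT: "Ac\<^sup>T = Ac" using sym unfolding Ac_def
    by (metis map_mat_transpose)
  have cv: "conjugate (Ac *\<^sub>v v) = Ac *\<^sub>v conjugate v"
  proof (rule eq_vecI)
    fix i assume "i < dim_vec (Ac *\<^sub>v conjugate v)"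
    hence i: "i < n" using Ac by simp
    show "conjugate (Ac *\<^sub>v v) $ i = (Ac *\<^sub>v conjugate v) $ i"
      using i Ac v A unfolding Ac_def
      by (simp add: scalar_prod_def)
  qed (insert Ac v, auto)
  have "(Ac *\<^sub>v v) \<bullet>c v = z * (v \<bullet>c v)"
    unfolding ev using v by simp
  moreover have "(Ac *\<^sub>v v) \<bullet>c v = v \<bullet>c (Ac *\<^sub>v v)"
  proof -
    have "(Ac *\<^sub>v v) \<bullet>c v = (Ac\<^sup>T *\<^sub>v v) \<bullet> conjugate v" using AcT by simp
    also have "\<dots> = v \<bullet> (Ac *\<^sub>v conjugate v)"
      by (rule transpose_vec_mult_scalar[OF Ac], insert v, auto)
    also have "\<dots> = v \<bullet>c (Ac *\<^sub>v v)" using cv by simp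
    finally show ?thesis .
  qed
  moreover have "v \<bullet>c (Ac *\<^sub>v v) = cnj z * (v \<bullet>c v)"
    unfolding ev conjugate_smult_vec using v by simp
  moreover have "v \<bullet>c v \<noteq> 0" using v v0 by simp
  ultimately have zc: "cnj z = z" by simp
  define r where "r = Re z"
  have "Im z = 0" using arg_cong[OF zc, of Im] by simp
  hence zr: "z = complex_of_real r" unfolding r_def by (simp add: complex_eq_iff)
  have "complex_of_real (poly (char_poly A) r) = poly (char_poly Ac) z"
    unfolding Ac_def zr of_real_hom.char_poly_hom[OF A] by simp
  hence "poly (char_poly A) r = 0" using \<open>poly (char_poly Ac) z = 0\<close> by simp
  hence "eigenvalue A r" using eigenvalue_root_char_poly[OF A] by simp
  then obtain w where "eigenvector A w r" unfolding eigenvalue_def by blast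
  thus ?thesis unfolding eigenvector_def using A by auto
qed
lemma orth_completion:
  fixes v :: "real vec"
  assumes v: "v \<in> carrier_vec n" and v1: "v \<bullet> v = 1"
  shows "\<exists>W. W \<in> carrier_mat n n \<and> W\<^sup>T * W = 1\<^sub>m n \<and> col W 0 = v"
proof -
  have v0: "v \<noteq> 0\<^sub>v n" using v1 v by auto
  have n: "n > 0" using v0 v by (cases n, auto)
  interpret cof_vec_space n "TYPE(real)" .
  define b where "b = basis_completion v"
  define ws where "ws = gram_schmidt n b"
  from basis_completion[OF v v0, folded b_def]
  have dist_b: "distinct b" 
    and indep: "\<not> lin_dep (set b)" and b: "set b \<subseteq> carrier_vec n" and hdb: "hd b = v" 
    and len_b: "length b = n" by auto
  from hdb len_b n obtain vs where bv: "b = v # vs" by (cases b, auto)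
  from gram_schmidt_result[OF b dist_b indep refl, folded ws_def]
  have ws: "set ws \<subseteq> carrier_vec n" "corthogonal ws" "length ws = n" 
    by (auto simp: len_b)
  from gram_schmidt_hd[OF v, of vs, folded bv] have hdws: "hd ws = v" unfolding ws_def .
  define nz where "nz = (\<lambda>w :: real vec. (1 / sqrt (w \<bullet> w)) \<cdot>\<^sub>v w)"
  define ws' where "ws' = map nz ws"
  define W where "W = mat_of_cols n ws'"
  have W: "W \<in> carrier_mat n n" unfolding W_def ws'_def using ws by auto
  have wsc: "\<And>i. i < n \<Longrightarrow> ws ! i \<in> carrier_vec n" using ws by auto
  have orth: "\<And>i j. i < n \<Longrightarrow> j < n \<Longrightarrow> (ws ! i \<bullet> ws ! j = 0) = (i \<noteq> j)"
    using ws(2,3) unfolding corthogonal_def by simp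
  have pos: "\<And>i. i < n \<Longrightarrow> ws ! i \<bullet> ws ! i > 0"
  proof -
    fix i assume i: "i < n"
    have "ws ! i \<bullet> ws ! i \<ge> 0" using conjugate_square_ge_0_vec[of "ws ! i"] by simp
    with orth[OF i i] show "ws ! i \<bullet> ws ! i > 0" by simp
  qed
  have colW: "\<And>i. i < n \<Longrightarrow> col W i = nz (ws ! i)"
    unfolding W_def ws'_def using ws wsc unfolding nz_def by (subst col_mat_of_cols, auto)
  have "W\<^sup>T * W = 1\<^sub>m n"
  proof (rule eq_matI)
    fix i j assume i: "i < dim_row (1\<^sub>m n)" and j: "j < dim_col (1\<^sub>m n)"
    hence i: "i < n" and j: "j < n" by auto
    have "(W\<^sup>T * W) $$ (i, j) = nz (ws ! i) \<bullet> nz (ws ! j)"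
      using i j W colW by simp
    also have "\<dots> = (1 / sqrt (ws ! i \<bullet> ws ! i)) * (1 / sqrt (ws ! j \<bullet> ws ! j)) * (ws ! i \<bullet> ws ! j)"
      unfolding nz_def using wsc[OF i] wsc[OF j] by simp
    also have "\<dots> = 1\<^sub>m n $$ (i, j)"
    proof (cases "i = j")
      case True
      have p: "ws ! i \<bullet> ws ! i > 0" using pos[OF i] .
      have "(1 / sqrt (ws ! i \<bullet> ws ! i)) * (1 / sqrt (ws ! i \<bullet> ws ! i)) * (ws ! i \<bullet> ws ! i)
          = (ws ! i \<bullet> ws ! i) / (sqrt (ws ! i \<bullet> ws ! i))^2" by (simp add: power2_eq_square)
      also have "\<dots> = 1" using p by simp
      finally show ?thesis using True i by simp
    next
      case False
      thus ?thesis using orth[OF i j] i j by simp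
    qed
    finally show "(W\<^sup>T * W) $$ (i, j) = 1\<^sub>m n $$ (i, j)" .
  qed (insert W, auto)
  moreover have "col W 0 = v"
  proof -
    have "ws ! 0 = v" using hdws ws(3) n by (metis hd_conv_nth length_0_conv neq0_conv)
    hence "col W 0 = nz v" using colW n by simp
    thus ?thesis unfolding nz_def using v1 by simp
  qed
  ultimately show ?thesis using W by blast
qed
definition diag_m :: "real list \<Rightarrow> real mat" where
  "diag_m ds = mat (length ds) (length ds) (\<lambda>(i,j). if i = j then ds ! i else 0)"

lemma diag_m_carrier[simp]: "diag_m ds \<in> carrier_mat (length ds) (length ds)"
  unfolding diag_m_def by simp

lemma diag_m_transpose[simp]: "(diag_m ds)\<^sup>T = diag_m ds"
  unfolding diag_m_def by (rule eq_matI, auto)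

lemma diag_m_Cons: "diag_m (e # ds) = four_block_mat (mat 1 1 (\<lambda>_. e)) (0\<^sub>m 1 (length ds)) (0\<^sub>m (length ds) 1) (diag_m ds)"
  unfolding diag_m_def by (rule eq_matI, auto simp: nth_Cons')

lemma transpose_sandwich:
  fixes B W :: "'a :: comm_semiring_0 mat"
  assumes B: "B \<in> carrier_mat m m" and sym: "B\<^sup>T = B" and W: "W \<in> carrier_mat m n"
  shows "(W\<^sup>T * B * W)\<^sup>T = W\<^sup>T * B * W"
proof -
  have "(W\<^sup>T * B * W)\<^sup>T = W\<^sup>T * (W\<^sup>T * B)\<^sup>T"
    by (rule transpose_mult[of _ n m _ n], insert B W, auto)
  also have "(W\<^sup>T * B)\<^sup>T = B\<^sup>T * W"
    using transpose_mult[of "W\<^sup>T" n m B m] B W by simp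
  finally show ?thesis using sym B W by simp
qed

lemma transpose_sandwich':
  fixes B W :: "'a :: comm_semiring_0 mat"
  assumes B: "B \<in> carrier_mat m m" and sym: "B\<^sup>T = B" and W: "W \<in> carrier_mat n m"
  shows "(W * B * W\<^sup>T)\<^sup>T = W * B * W\<^sup>T"
  using transpose_sandwich[OF B sym, of "W\<^sup>T" n] W by simp

lemma spectral_unsorted:
  fixes A :: "real mat"
  assumes "A \<in> carrier_mat n n" and "A\<^sup>T = A"
  shows "\<exists>U ds. U \<in> carrier_mat n n \<and> U\<^sup>T * U = 1\<^sub>m n \<and> length ds = n \<and> A = U * diag_m ds * U\<^sup>T"
  using assms
proof (induct n arbitrary: A)
  case 0
  show ?case
    by (rule exI[of _ "1\<^sub>m 0"], rule exI[of _ "[]"], insert 0, auto intro!: eq_matI simp: diag_m_def)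
next
  case (Suc m A)
  define n where "n = Suc m"
  have A: "A \<in> carrier_mat n n" and sym: "A\<^sup>T = A" using Suc n_def by auto
  obtain e v0 where v0: "v0 \<in> carrier_vec n" "v0 \<noteq> 0\<^sub>v n" and ev0: "A *\<^sub>v v0 = e \<cdot>\<^sub>v v0"
    using real_sym_eigen[OF A sym] n_def by auto
  define v where "v = (1 / sqrt (v0 \<bullet> v0)) \<cdot>\<^sub>v v0"
  have pos: "v0 \<bullet> v0 > 0" using v0 conjugate_square_greater_0_vec[of v0 n] by simp
  have v: "v \<in> carrier_vec n" using v0 unfolding v_def by simp
  have v1: "v \<bullet> v = 1"
  proof -
    have "v \<bullet> v = (1 / sqrt (v0 \<bullet> v0)) * (1 / sqrt (v0 \<bullet> v0)) * (v0 \<bullet> v0)"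
      unfolding v_def using v0 by simp
    also have "\<dots> = (v0 \<bullet> v0) / (sqrt (v0 \<bullet> v0))^2" by (simp add: power2_eq_square)
    also have "\<dots> = 1" using pos by simp
    finally show ?thesis .
  qed
  have ev: "A *\<^sub>v v = e \<cdot>\<^sub>v v" unfolding v_def using A v0 ev0
    by (simp add: mult_mat_vec smult_smult_assoc mult.commute)
  obtain W where W: "W \<in> carrier_mat n n" and WTW: "W\<^sup>T * W = 1\<^sub>m n" and colW: "col W 0 = v"
    using orth_completion[OF v v1] by blast
  have WWT: "W * W\<^sup>T = 1\<^sub>m n" using mat_mult_left_right_inverse[OF _ W WTW] W by simp
  define A' where "A' = W\<^sup>T * A * W"
  have A': "A' \<in> carrier_mat n n" unfolding A'_def using W A by simp
  have symA': "A'\<^sup>T = A'" unfolding A'_def by (rule transpose_sandwich[OF A sym W])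
  have col0: "\<And>i. i < n \<Longrightarrow> A' $$ (i, 0) = (if i = 0 then e else 0)"
  proof -
    fix i assume i: "i < n"
    have "A' $$ (i, 0) = (W\<^sup>T * (A * W)) $$ (i, 0)" unfolding A'_def using W A
      by (simp add: assoc_mult_mat[of _ n n _ n _ n])
    also have "\<dots> = col W i \<bullet> (A *\<^sub>v col W 0)" using i W A n_def by (simp add: mult_mat_vec_def)
    also have "\<dots> = e * (col W i \<bullet> col W 0)" using colW ev v W i by simp
    also have "col W i \<bullet> col W 0 = (W\<^sup>T * W) $$ (i, 0)" using i W n_def by simp
    also have "\<dots> = (if i = 0 then 1 else 0)" unfolding WTW using i n_def by simp
    finally show "A' $$ (i, 0) = (if i = 0 then e else 0)" by simp
  qed
  have row0: "\<And>j. j < n \<Longrightarrow> A' $$ (0, j) = (if j = 0 then e else 0)"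
  proof -
    fix j assume j: "j < n"
    have "A' $$ (0, j) = A'\<^sup>T $$ (j, 0)" using j A' n_def by simp
    thus "A' $$ (0, j) = (if j = 0 then e else 0)" using symA' col0[OF j] by simp
  qed
  define A3 where "A3 = mat m m (\<lambda>(i,j). A' $$ (Suc i, Suc j))"
  have A3: "A3 \<in> carrier_mat m m" unfolding A3_def by simp
  have symA3: "A3\<^sup>T = A3"
  proof (rule eq_matI)
    fix i j assume "i < dim_row A3" "j < dim_col A3"
    hence i: "i < m" and j: "j < m" using A3 by auto
    have "A' $$ (Suc j, Suc i) = A'\<^sup>T $$ (Suc i, Suc j)" using i j A' n_def by simp
    thus "A3\<^sup>T $$ (i, j) = A3 $$ (i, j)" using symA' i j unfolding A3_def by simp
  qed (insert A3, auto)
  obtain U3 ds3 where U3: "U3 \<in> carrier_mat m m" and U3TU3: "U3\<^sup>T * U3 = 1\<^sub>m m"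
    and len3: "length ds3 = m" and A3eq: "A3 = U3 * diag_m ds3 * U3\<^sup>T"
    using Suc(1)[OF A3 symA3] by blast
  have A'block: "A' = four_block_mat (mat 1 1 (\<lambda>_. e)) (0\<^sub>m 1 m) (0\<^sub>m m 1) A3"
  proof (rule eq_matI)
    fix i j assume "i < dim_row (four_block_mat (mat 1 1 (\<lambda>_. e)) (0\<^sub>m 1 m) (0\<^sub>m m 1) A3)"
      "j < dim_col (four_block_mat (mat 1 1 (\<lambda>_. e)) (0\<^sub>m 1 m) (0\<^sub>m m 1) A3)"
    hence i: "i < n" and j: "j < n" using A3 n_def by auto
    show "A' $$ (i, j) = four_block_mat (mat 1 1 (\<lambda>_. e)) (0\<^sub>m 1 m) (0\<^sub>m m 1) A3 $$ (i, j)"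
    proof (cases "i = 0")
      case True thus ?thesis using row0[OF j] j A3 n_def by simp
    next
      case False
      then obtain i' where i': "i = Suc i'" by (cases i, auto)
      show ?thesis
      proof (cases "j = 0")
        case True thus ?thesis using col0[OF i] i A3 n_def False by simp
      next
        case False
        then obtain j' where j': "j = Suc j'" by (cases j, auto)
        show ?thesis using i j i' j' A3 n_def unfolding A3_def by simp
      qed
    qed
  qed (insert A' A3 n_def, auto)
  define V where "V = four_block_mat (1\<^sub>m 1) (0\<^sub>m 1 m) (0\<^sub>m m 1) U3"
  have V: "V \<in> carrier_mat n n" unfolding V_def n_def using U3 by auto
  have VT: "V\<^sup>T = four_block_mat (1\<^sub>m 1) (0\<^sub>m 1 m) (0\<^sub>m m 1) U3\<^sup>T"
    unfolding V_def by (subst transpose_four_block_mat, insert U3, auto)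
  have VTV: "V\<^sup>T * V = 1\<^sub>m n"
    unfolding VT unfolding V_def n_def
    by (subst mult_four_block_mat, insert U3 U3TU3, auto)
  have D: "diag_m (e # ds3) = four_block_mat (mat 1 1 (\<lambda>_. e)) (0\<^sub>m 1 m) (0\<^sub>m m 1) (diag_m ds3)"
    using diag_m_Cons len3 by simp
  have Dc: "diag_m ds3 \<in> carrier_mat m m" using len3 diag_m_carrier[of ds3] by simp
  have VDVT: "V * diag_m (e # ds3) * V\<^sup>T = A'"
  proof -
    have "V * diag_m (e # ds3) = four_block_mat (mat 1 1 (\<lambda>_. e)) (0\<^sub>m 1 m) (0\<^sub>m m 1) (U3 * diag_m ds3)"
      unfolding D V_def
      by (subst mult_four_block_mat, insert U3 Dc, auto)
    hence "V * diag_m (e # ds3) * V\<^sup>T = four_block_mat (mat 1 1 (\<lambda>_. e)) (0\<^sub>m 1 m) (0\<^sub>m m 1) (U3 * diag_m ds3 * U3\<^sup>T)"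
      unfolding VT by (simp only:, subst mult_four_block_mat, insert U3 Dc, auto)
    thus ?thesis unfolding A'block A3eq .
  qed
  define U where "U = W * V"
  have U: "U \<in> carrier_mat n n" unfolding U_def using W V by simp
  have "U\<^sup>T * U = 1\<^sub>m n"
  proof -
    have "U\<^sup>T * U = V\<^sup>T * (W\<^sup>T * W) * V" unfolding U_def using W V
      by (simp add: transpose_mult[of _ n n] assoc_mult_mat[of _ n n _ n _ n])
    also have "\<dots> = 1\<^sub>m n" unfolding WTW using V VTV by simp
    finally show ?thesis .
  qed
  moreover have "A = U * diag_m (e # ds3) * U\<^sup>T"
  proof -
    have Dc': "diag_m (e # ds3) \<in> carrier_mat n n" using len3 diag_m_carrier[of "e # ds3"] n_def by simp
    have "U * diag_m (e # ds3) * U\<^sup>T = W * (V * diag_m (e # ds3) * V\<^sup>T) * W\<^sup>T" unfolding U_def using W V Dc'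
      by (simp add: transpose_mult[of _ n n] assoc_mult_mat[of _ n n _ n _ n])
    also have "\<dots> = (W * W\<^sup>T) * A * (W * W\<^sup>T)" unfolding VDVT A'_def using W A
      by (simp add: assoc_mult_mat[of _ n n _ n _ n])
    also have "\<dots> = A" unfolding WWT using A by simp
    finally show ?thesis by simp
  qed
  moreover have "length (e # ds3) = Suc m" using len3 by simp
  ultimately show ?case using U unfolding n_def by blast
qed
lemma mult_diag_m_entry:
  assumes U: "U \<in> carrier_mat r (length ds)" and a: "a < r" and j: "j < length ds"
  shows "(U * diag_m ds) $$ (a, j) = U $$ (a, j) * ds ! j"
proof -
  have "(U * diag_m ds) $$ (a, j) = (\<Sum>k<length ds. U $$ (a, k) * (if k = j then ds ! j else 0))"
    using U a j unfolding diag_m_def by (simp add: scalar_prod_def lessThan_atLeast0 cong: if_cong)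
  also have "\<dots> = U $$ (a, j) * ds ! j"
    by (subst sum.mono_neutral_cong_right[of _ "{j}"], insert j, auto)
  finally show ?thesis .
qed

lemma sandwich_entry:
  assumes U: "U \<in> carrier_mat r (length ds)" and a: "a < r" and b: "b < r"
  shows "(U * diag_m ds * U\<^sup>T) $$ (a, b) = (\<Sum>j<length ds. U $$ (a, j) * ds ! j * U $$ (b, j))"
proof -
  have "(U * diag_m ds * U\<^sup>T) $$ (a, b) = (\<Sum>j<length ds. (U * diag_m ds) $$ (a, j) * U $$ (b, j))"
  proof -
    have UD: "U * diag_m ds \<in> carrier_mat r (length ds)" using U by simp
    have "(U * diag_m ds * U\<^sup>T) $$ (a, b) = (\<Sum>i = 0..<length ds. row (U * diag_m ds) a $ i * U $$ (b, i))"
      using U a b UD by (simp add: scalar_prod_def)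
    also have "\<dots> = (\<Sum>j<length ds. (U * diag_m ds) $$ (a, j) * U $$ (b, j))"
      unfolding lessThan_atLeast0 by (rule sum.cong[OF refl], subst index_row, insert UD a, auto)
    finally show ?thesis .
  qed
  also have "\<dots> = (\<Sum>j<length ds. U $$ (a, j) * ds ! j * U $$ (b, j))"
    by (rule sum.cong, insert mult_diag_m_entry[OF U a], auto)
  finally show ?thesis .
qed

lemma spectral_sorted:
  fixes A :: "real mat"
  assumes A: "A \<in> carrier_mat n n" and sym: "A\<^sup>T = A"
  shows "\<exists>U ds. U \<in> carrier_mat n n \<and> U\<^sup>T * U = 1\<^sub>m n \<and> U * U\<^sup>T = 1\<^sub>m n \<and> length ds = n
     \<and> sorted_wrt (\<ge>) ds \<and> A = U * diag_m ds * U\<^sup>T"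
proof -
  obtain U0 ds0 where U0: "U0 \<in> carrier_mat n n" and U0TU0: "U0\<^sup>T * U0 = 1\<^sub>m n"
    and len0: "length ds0 = n" and A0: "A = U0 * diag_m ds0 * U0\<^sup>T"
    using spectral_unsorted[OF A sym] by blast
  have U0U0T: "U0 * U0\<^sup>T = 1\<^sub>m n" using mat_mult_left_right_inverse[OF _ U0 U0TU0] U0 by simp
  define ps where "ps = sort_key (\<lambda>j. - ds0 ! j) [0..<n]"
  define p where "p = (\<lambda>j. ps ! j)"
  have mps: "mset ps = mset [0..<n]" unfolding ps_def by simp
  have lenps: "length ps = n" using mps by (metis length_upt minus_nat.diff_0 size_mset)
  have dps: "distinct ps" using mps by (metis distinct_upt mset_eq_imp_distinct_iff)
  have sps: "set ps = {0..<n}" using mps by (metis atLeastLessThan_upt set_mset_mset)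
  have bij: "bij_betw p {0..<n} {0..<n}"
    unfolding p_def using bij_betw_nth[OF dps, of "{0..<n}"] lenps sps by (simp add: atLeast0LessThan)
  have pinj: "\<And>i j. i < n \<Longrightarrow> j < n \<Longrightarrow> p i = p j \<longleftrightarrow> i = j"
    using bij unfolding bij_betw_def inj_on_def by auto
  have prange: "\<And>i. i < n \<Longrightarrow> p i < n" using bij unfolding bij_betw_def by auto
  define ds where "ds = map (\<lambda>j. ds0 ! j) ps"
  have len: "length ds = n" unfolding ds_def using lenps by simp
  have sorted: "sorted_wrt (\<ge>) ds"
  proof -
    have "sorted (map (\<lambda>j. - ds0 ! j) ps)" unfolding ps_def by (rule sorted_sort_key)
    thus ?thesis unfolding ds_def sorted_map sorted_wrt_map by simp
  qed
  have dsp: "\<And>j. j < n \<Longrightarrow> ds ! j = ds0 ! p j" unfolding ds_def p_def using lenps by simp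
  define U where "U = mat n n (\<lambda>(i,j). U0 $$ (i, p j))"
  have U: "U \<in> carrier_mat n n" unfolding U_def by simp
  have reidx: "\<And>f :: nat \<Rightarrow> real. (\<Sum>j<n. f (p j)) = (\<Sum>j<n. f j)"
    using sum.reindex_bij_betw[OF bij] by (simp add: atLeast0LessThan)
  have "U\<^sup>T * U = 1\<^sub>m n"
  proof (rule eq_matI)
    fix i j assume "i < dim_row (1\<^sub>m n)" "j < dim_col (1\<^sub>m n)"
    hence i: "i < n" and j: "j < n" by auto
    have "(U\<^sup>T * U) $$ (i, j) = (U0\<^sup>T * U0) $$ (p i, p j)"
      using i j U U0 prange[OF i] prange[OF j] unfolding U_def
      by (simp add: scalar_prod_def)
    also have "\<dots> = 1\<^sub>m n $$ (i, j)" unfolding U0TU0 using i j prange pinj by simp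
    finally show "(U\<^sup>T * U) $$ (i, j) = 1\<^sub>m n $$ (i, j)" .
  qed (insert U, auto)
  moreover have "U * U\<^sup>T = 1\<^sub>m n"
  proof (rule eq_matI)
    fix i j assume "i < dim_row (1\<^sub>m n)" "j < dim_col (1\<^sub>m n)"
    hence i: "i < n" and j: "j < n" by auto
    have "(U * U\<^sup>T) $$ (i, j) = (\<Sum>k<n. U0 $$ (i, p k) * U0 $$ (j, p k))"
      using i j U unfolding U_def by (simp add: scalar_prod_def lessThan_atLeast0)
    also have "\<dots> = (\<Sum>k<n. U0 $$ (i, k) * U0 $$ (j, k))"
      by (rule reidx[of "\<lambda>k. U0 $$ (i, k) * U0 $$ (j, k)"])
    also have "\<dots> = (U0 * U0\<^sup>T) $$ (i, j)"
      using i j U0 by (simp add: scalar_prod_def lessThan_atLeast0)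
    also have "\<dots> = 1\<^sub>m n $$ (i, j)" unfolding U0U0T ..
    finally show "(U * U\<^sup>T) $$ (i, j) = 1\<^sub>m n $$ (i, j)" .
  qed (insert U, auto)
  moreover have "A = U * diag_m ds * U\<^sup>T"
  proof (rule eq_matI)
    fix a b assume "a < dim_row (U * diag_m ds * U\<^sup>T)" "b < dim_col (U * diag_m ds * U\<^sup>T)"
    hence a: "a < n" and b: "b < n" using U by auto
    have "(U * diag_m ds * U\<^sup>T) $$ (a, b) = (\<Sum>j<n. U $$ (a, j) * ds ! j * U $$ (b, j))"
      using sandwich_entry[of U n ds a b] U len a b by simp
    also have "\<dots> = (\<Sum>j<n. U0 $$ (a, p j) * ds0 ! p j * U0 $$ (b, p j))"
      by (rule sum.cong, insert a b dsp prange, auto simp: U_def)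
    also have "\<dots> = (\<Sum>j<n. U0 $$ (a, j) * ds0 ! j * U0 $$ (b, j))"
      by (rule reidx[of "\<lambda>j. U0 $$ (a, j) * ds0 ! j * U0 $$ (b, j)"])
    also have "\<dots> = A $$ (a, b)"
      unfolding A0 using sandwich_entry[of U0 n ds0 a b] U0 len0 a b by simp
    finally show "A $$ (a, b) = (U * diag_m ds * U\<^sup>T) $$ (a, b)" by simp
  qed (insert A U, auto)
  ultimately show ?thesis using U len sorted by blast
qed
lemma prod_linear_remove1:
  fixes ys :: "'a :: idom list"
  assumes "x \<in> set ys"
  shows "(\<Prod>a\<leftarrow>ys. [:- a, 1:]) = [:- x, 1:] * (\<Prod>a\<leftarrow>remove1 x ys. [:- a, 1:])"
proof -
  have m: "mset ys = add_mset x (mset (remove1 x ys))" using assms by simp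
  have "(\<Prod>a\<leftarrow>ys. [:- a, 1:]) = prod_mset (image_mset (\<lambda>a. [:- a, 1:]) (mset ys))"
    by (simp add: prod_mset_prod_list[symmetric])
  also have "\<dots> = [:- x, 1:] * prod_mset (image_mset (\<lambda>a. [:- a, 1:]) (mset (remove1 x ys)))"
    unfolding m by simp
  also have "prod_mset (image_mset (\<lambda>a. [:- a, 1:]) (mset (remove1 x ys))) = (\<Prod>a\<leftarrow>remove1 x ys. [:- a, 1:])"
    by (simp add: prod_mset_prod_list[symmetric])
  finally show ?thesis .
qed

lemma prod_linear_mset:
  fixes xs ys :: "'a :: idom list"
  assumes "(\<Prod>a\<leftarrow>xs. [:- a, 1:]) = (\<Prod>a\<leftarrow>ys. [:- a, 1:])"
  shows "mset xs = mset ys"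
  using assms
proof (induct xs arbitrary: ys)
  case Nil
  have "length ys = 0" using degree_linear_factors[of uminus ys] Nil[symmetric]
    degree_linear_factors[of uminus "[]"] by simp
  thus ?case by simp
next
  case (Cons x xs ys)
  have "poly (\<Prod>a\<leftarrow>ys. [:- a, 1:]) x = 0" unfolding Cons(2)[symmetric] by simp
  hence x: "x \<in> set ys" unfolding poly_prod_list_zero_iff by auto
  have "[:- x, 1:] * (\<Prod>a\<leftarrow>xs. [:- a, 1:]) = [:- x, 1:] * (\<Prod>a\<leftarrow>remove1 x ys. [:- a, 1:])"
    using Cons(2) unfolding prod_linear_remove1[OF x] by simp
  hence "(\<Prod>a\<leftarrow>xs. [:- a, 1:]) = (\<Prod>a\<leftarrow>remove1 x ys. [:- a, 1:])"
    by (subst (asm) mult_left_cancel, auto)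
  from Cons(1)[OF this] have "mset xs = mset (remove1 x ys)" .
  thus ?case using x by simp
qed

lemma sorted_desc_mset_eq:
  fixes xs ys :: "real list"
  assumes "mset xs = mset ys" "sorted_wrt (\<ge>) xs" "sorted_wrt (\<ge>) ys"
  shows "xs = ys"
proof -
  have s1: "sorted (rev xs)" and s2: "sorted (rev ys)" using assms(2,3)
    by (simp_all add: sorted_wrt_rev)
  have "sort (rev ys) = rev xs" by (rule properties_for_sort, insert assms(1) s1, auto)
  moreover have "sort (rev ys) = rev ys" by (rule properties_for_sort, insert s2, auto)
  ultimately show ?thesis by simp
qed

lemma eig_list_char:
  fixes A U :: "real mat"
  assumes A: "A \<in> carrier_mat n n" and U: "U \<in> carrier_mat n n"
    and UTU: "U\<^sup>T * U = 1\<^sub>m n" and UUT: "U * U\<^sup>T = 1\<^sub>m n"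
    and len: "length ds = n" and sorted: "sorted_wrt (\<ge>) ds"
    and eq: "A = U * diag_m ds * U\<^sup>T"
  shows "eig_list A = ds"
proof -
  have D: "diag_m ds \<in> carrier_mat n n" using len diag_m_carrier[of ds] by simp
  have "similar_mat A (diag_m ds)" unfolding similar_mat_def
    by (rule exI[of _ U], rule exI[of _ "U\<^sup>T"], unfold similar_mat_wit_def Let_def,
        insert A U D UTU UUT eq, auto)
  hence "char_poly A = char_poly (diag_m ds)" by (rule char_poly_similar)
  also have "char_poly (diag_m ds) = (\<Prod>a\<leftarrow>diag_mat (diag_m ds). [:- a, 1:])"
    by (rule char_poly_upper_triangular[OF D], auto simp: upper_triangular_def diag_m_def)
  also have "diag_mat (diag_m ds) = ds" unfolding diag_mat_def diag_m_def
    by (rule nth_equalityI, auto)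
  finally have cp: "char_poly A = (\<Prod>a\<leftarrow>ds. [:- a, 1:])" .
  show ?thesis unfolding eig_list_def
  proof (rule the_equality)
    show "sorted_wrt (\<ge>) ds \<and> char_poly A = (\<Prod>a\<leftarrow>ds. [:- a, 1:])" using sorted cp by simp
  next
    fix xs assume "sorted_wrt (\<ge>) xs \<and> char_poly A = (\<Prod>a\<leftarrow>xs. [:- a, 1:])"
    hence s: "sorted_wrt (\<ge>) xs" and "(\<Prod>a\<leftarrow>xs. [:- a, 1:]) = (\<Prod>a\<leftarrow>ds. [:- a, 1:])" using cp by auto
    from prod_linear_mset[OF this(2)] have "mset xs = mset ds" .
    thus "xs = ds" using sorted_desc_mset_eq s sorted by blast
  qed
qed
lemma underdetermined:
  fixes G :: "real mat"
  assumes G: "G \<in> carrier_mat m i" and mi: "m < i"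
  shows "\<exists>c. c \<in> carrier_vec i \<and> c \<noteq> 0\<^sub>v i \<and> G *\<^sub>v c = 0\<^sub>v m"
proof -
  define G' where "G' = mat i i (\<lambda>(a,b). if a < m then G $$ (a,b) else 0)"
  have G': "G' \<in> carrier_mat i i" unfolding G'_def by simp
  have "G' = mat\<^sub>r i i (\<lambda>a. if a = i - 1 then 0\<^sub>v i else row G' a)"
    by (rule eq_matI, insert mi, auto simp: G'_def)
  moreover have "det (mat\<^sub>r i i (\<lambda>a. if a = i - 1 then 0\<^sub>v i else row G' a)) = 0"
    by (rule det_row_0, insert mi, auto simp: G'_def)
  ultimately have "det G' = 0" by simp
  then obtain c where c: "c \<in> carrier_vec i" "c \<noteq> 0\<^sub>v i" and Gc: "G' *\<^sub>v c = 0\<^sub>v i"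
    using det_0_iff_vec_prod_zero[OF G'] by blast
  have "G *\<^sub>v c = 0\<^sub>v m"
  proof (rule eq_vecI)
    fix a assume "a < dim_vec (0\<^sub>v m :: real vec)"
    hence a: "a < m" by simp
    have "(G' *\<^sub>v c) $ a = 0" using Gc a mi by simp
    moreover have "row G' a = row G a" using a G mi unfolding G'_def by (intro eq_vecI, auto)
    ultimately show "(G *\<^sub>v c) $ a = 0\<^sub>v m $ a" using a G G' mi by simp
  qed (insert G, auto)
  thus ?thesis using c by blast
qed
definition spec :: "real mat \<Rightarrow> nat \<Rightarrow> real mat \<Rightarrow> real list \<Rightarrow> bool" where
  "spec A n U ds \<longleftrightarrow> U \<in> carrier_mat n n \<and> U\<^sup>T * U = 1\<^sub>m n \<and> U * U\<^sup>T = 1\<^sub>m n \<and> length ds = n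
     \<and> sorted_wrt (\<ge>) ds \<and> A = U * diag_m ds * U\<^sup>T"

lemma spec_exists: "A \<in> carrier_mat n n \<Longrightarrow> A\<^sup>T = A \<Longrightarrow> \<exists>U ds. spec A n U ds"
  unfolding spec_def using spectral_sorted by blast

lemma spec_eig_list: "A \<in> carrier_mat n n \<Longrightarrow> spec A n U ds \<Longrightarrow> eig_list A = ds"
  unfolding spec_def using eig_list_char by blast

lemma spec_eigval: "A \<in> carrier_mat n n \<Longrightarrow> spec A n U ds \<Longrightarrow> eigval A i = ds ! (i - 1)"
  unfolding eigval_def using spec_eig_list by simp

lemma diag_m_mult_vec:
  assumes z: "z \<in> carrier_vec (length ds)" and j: "j < length ds"
  shows "(diag_m ds *\<^sub>v z) $ j = ds ! j * z $ j"
proof -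
  have "(diag_m ds *\<^sub>v z) $ j = (\<Sum>k<length ds. (if j = k then ds ! j else 0) * z $ k)"
    using z j unfolding diag_m_def by (simp add: scalar_prod_def lessThan_atLeast0 cong: if_cong)
  also have "\<dots> = ds ! j * z $ j"
    by (subst sum.mono_neutral_cong_right[of _ "{j}"], insert j, auto)
  finally show ?thesis .
qed

lemma quad_form_spec:
  assumes sp: "spec A n U ds" and y: "y \<in> carrier_vec n"
  shows "y \<bullet> (A *\<^sub>v y) = (\<Sum>j<n. ds ! j * ((U\<^sup>T *\<^sub>v y) $ j)^2)"
    and "y \<bullet> y = (\<Sum>j<n. ((U\<^sup>T *\<^sub>v y) $ j)^2)"
proof -
  from sp have U: "U \<in> carrier_mat n n" and UUT: "U * U\<^sup>T = 1\<^sub>m n" and len: "length ds = n"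
    and A: "A = U * diag_m ds * U\<^sup>T" unfolding spec_def by auto
  define z where "z = U\<^sup>T *\<^sub>v y"
  have z: "z \<in> carrier_vec n" unfolding z_def using U y by simp
  have D: "diag_m ds \<in> carrier_mat n n" using len diag_m_carrier[of ds] by simp
  have "A *\<^sub>v y = U *\<^sub>v (diag_m ds *\<^sub>v z)" unfolding A z_def using U D y
    by (simp add: assoc_mult_mat_vec[of _ n n _ n])
  hence "y \<bullet> (A *\<^sub>v y) = y \<bullet> (U *\<^sub>v (diag_m ds *\<^sub>v z))" by simp
  also have "\<dots> = z \<bullet> (diag_m ds *\<^sub>v z)" unfolding z_def
    by (rule transpose_vec_mult_scalar[symmetric, of U n n], insert U D y z, auto)
  also have "\<dots> = (\<Sum>j<n. z $ j * (ds ! j * z $ j))"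
    using z D diag_m_mult_vec[of z ds] len by (simp add: scalar_prod_def lessThan_atLeast0)
  also have "\<dots> = (\<Sum>j<n. ds ! j * (z $ j)^2)" by (simp add: power2_eq_square ac_simps)
  finally show "y \<bullet> (A *\<^sub>v y) = (\<Sum>j<n. ds ! j * ((U\<^sup>T *\<^sub>v y) $ j)^2)" unfolding z_def .
  have "y = U *\<^sub>v z" unfolding z_def using U y UUT
    by (simp add: assoc_mult_mat_vec[symmetric, of _ n n _ n])
  hence "y \<bullet> y = y \<bullet> (U *\<^sub>v z)" by simp
  also have "\<dots> = z \<bullet> z" unfolding z_def
    by (rule transpose_vec_mult_scalar[symmetric, of U n n], insert U y z, auto)
  also have "\<dots> = (\<Sum>j<n. (z $ j)^2)" using z by (simp add: scalar_prod_def lessThan_atLeast0 power2_eq_square)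
  finally show "y \<bullet> y = (\<Sum>j<n. ((U\<^sup>T *\<^sub>v y) $ j)^2)" unfolding z_def .
qed
lemma isometry_norm:
  fixes X :: "real mat"
  assumes X: "X \<in> carrier_mat n i" and XTX: "X\<^sup>T * X = 1\<^sub>m i" and c: "c \<in> carrier_vec i"
  shows "(X *\<^sub>v c) \<bullet> (X *\<^sub>v c) = c \<bullet> c"
proof -
  have "(X\<^sup>T *\<^sub>v (X *\<^sub>v c)) \<bullet> c = (X *\<^sub>v c) \<bullet> (X *\<^sub>v c)"
    by (rule transpose_vec_mult_scalar[OF X c], insert X c, auto)
  moreover have "X\<^sup>T *\<^sub>v (X *\<^sub>v c) = c" using X c XTX
    by (simp add: assoc_mult_mat_vec[symmetric, of _ i n _ i])
  ultimately show ?thesis by simp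
qed

lemma cf_up:
  assumes sp: "spec A n U ds" and X: "X \<in> carrier_mat n i" and XTX: "X\<^sup>T * X = 1\<^sub>m i"
    and i1: "1 \<le> i" and "i \<le> n"
    and hyp: "\<forall>c \<in> carrier_vec i. t * (c \<bullet> c) \<le> (X *\<^sub>v c) \<bullet> (A *\<^sub>v (X *\<^sub>v c))"
  shows "t \<le> ds ! (i - 1)"
proof -
  from sp have U: "U \<in> carrier_mat n n" and len: "length ds = n" and sorted: "sorted_wrt (\<ge>) ds"
    unfolding spec_def by auto
  define G where "G = mat (i - 1) i (\<lambda>(a,b). (U\<^sup>T * X) $$ (a,b))"
  have G: "G \<in> carrier_mat (i - 1) i" unfolding G_def by simp
  obtain c where c: "c \<in> carrier_vec i" and c0: "c \<noteq> 0\<^sub>v i" and Gc: "G *\<^sub>v c = 0\<^sub>v (i - 1)"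
    using underdetermined[OF G] i1 by auto
  define y where "y = X *\<^sub>v c"
  have y: "y \<in> carrier_vec n" unfolding y_def using X c by simp
  define z where "z = U\<^sup>T *\<^sub>v y"
  have zU: "z = (U\<^sup>T * X) *\<^sub>v c" unfolding z_def y_def using U X c
    by (simp add: assoc_mult_mat_vec[of _ n n _ i])
  have z0: "\<And>a. a < i - 1 \<Longrightarrow> z $ a = 0"
  proof -
    fix a assume a: "a < i - 1"
    have "row G a = row (U\<^sup>T * X) a" unfolding G_def using a U X \<open>i \<le> n\<close>
      by (intro eq_vecI, auto)
    moreover have "(G *\<^sub>v c) $ a = 0" using Gc a by simp
    ultimately show "z $ a = 0" unfolding zU using a G U X \<open>i \<le> n\<close> by simp
  qed
  have cc: "y \<bullet> y = c \<bullet> c" unfolding y_def by (rule isometry_norm[OF X XTX c])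
  have pos: "c \<bullet> c > 0" using c c0 conjugate_square_greater_0_vec[of c i] by simp
  have "t * (c \<bullet> c) \<le> y \<bullet> (A *\<^sub>v y)" using hyp c unfolding y_def by auto
  also have "\<dots> = (\<Sum>j<n. ds ! j * (z $ j)^2)" unfolding z_def by (rule quad_form_spec(1)[OF sp y])
  also have "\<dots> \<le> (\<Sum>j<n. ds ! (i - 1) * (z $ j)^2)"
  proof (rule sum_mono)
    fix j assume "j \<in> {..<n}"
    hence j: "j < n" by simp
    show "ds ! j * (z $ j)^2 \<le> ds ! (i - 1) * (z $ j)^2"
    proof (cases "j < i - 1")
      case True thus ?thesis using z0 by simp
    next
      case False
      hence "ds ! j \<le> ds ! (i - 1)"
        using sorted j len i1 \<open>i \<le> n\<close> by (cases "j = i - 1", auto simp: sorted_wrt_iff_nth_less)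
      thus ?thesis by (simp add: mult_right_mono)
    qed
  qed
  also have "\<dots> = ds ! (i - 1) * (y \<bullet> y)" unfolding z_def quad_form_spec(2)[OF sp y]
    by (simp add: sum_distrib_left)
  finally have "t * (c \<bullet> c) \<le> ds ! (i - 1) * (c \<bullet> c)" unfolding cc .
  thus ?thesis using pos by simp
qed

lemma cf_down:
  assumes sp: "spec A n U ds" and i1: "1 \<le> i" and "i \<le> n"
  shows "\<exists>X. X \<in> carrier_mat n i \<and> X\<^sup>T * X = 1\<^sub>m i \<and>
    (\<forall>c \<in> carrier_vec i. ds ! (i - 1) * (c \<bullet> c) \<le> (X *\<^sub>v c) \<bullet> (A *\<^sub>v (X *\<^sub>v c)))"
proof -
  from sp have U: "U \<in> carrier_mat n n" and UTU: "U\<^sup>T * U = 1\<^sub>m n" and len: "length ds = n"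
    and sorted: "sorted_wrt (\<ge>) ds" unfolding spec_def by auto
  define E where "E = mat n i (\<lambda>(a,b). if a = b then 1 else (0::real))"
  have E: "E \<in> carrier_mat n i" unfolding E_def by simp
  have ETE: "E\<^sup>T * E = 1\<^sub>m i"
  proof (rule eq_matI)
    fix a b assume "a < dim_row (1\<^sub>m i)" "b < dim_col (1\<^sub>m i)"
    hence a: "a < i" and b: "b < i" by auto
    have "(E\<^sup>T * E) $$ (a, b) = (\<Sum>r<n. (if r = a then 1 else 0) * (if r = b then 1 else (0::real)))"
      using a b E \<open>i \<le> n\<close> unfolding E_def by (simp add: scalar_prod_def lessThan_atLeast0)
    also have "\<dots> = (if a = b then 1 else 0)"
      by (subst sum.mono_neutral_cong_right[of _ "{a}"], insert a b \<open>i \<le> n\<close>, auto)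
    finally show "(E\<^sup>T * E) $$ (a, b) = 1\<^sub>m i $$ (a, b)" using a b by simp
  qed (insert E, auto)
  have Ec: "\<And>c j. c \<in> carrier_vec i \<Longrightarrow> j < n \<Longrightarrow> (E *\<^sub>v c) $ j = (if j < i then c $ j else 0)"
  proof -
    fix c :: "real vec" and j assume c: "c \<in> carrier_vec i" and j: "j < n"
    have "(E *\<^sub>v c) $ j = (\<Sum>b<i. (if j = b then 1 else 0) * c $ b)"
      using c j unfolding E_def by (simp add: scalar_prod_def lessThan_atLeast0)
    also have "\<dots> = (if j < i then c $ j else 0)"
    proof (cases "j < i")
      case True thus ?thesis by (subst sum.mono_neutral_cong_right[of _ "{j}"], auto)
    next
      case False thus ?thesis by (auto intro!: sum.neutral)
    qed
    finally show "(E *\<^sub>v c) $ j = (if j < i then c $ j else 0)" .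
  qed
  define X where "X = U * E"
  have X: "X \<in> carrier_mat n i" unfolding X_def using U E by simp
  have XTX: "X\<^sup>T * X = 1\<^sub>m i"
  proof -
    have "X\<^sup>T * X = E\<^sup>T * (U\<^sup>T * U) * E" unfolding X_def using U E
      by (simp add: transpose_mult[of _ n n] assoc_mult_mat[of _ i n _ n _ i])
    thus ?thesis unfolding UTU using E ETE by simp
  qed
  have "\<forall>c \<in> carrier_vec i. ds ! (i - 1) * (c \<bullet> c) \<le> (X *\<^sub>v c) \<bullet> (A *\<^sub>v (X *\<^sub>v c))"
  proof
    fix c :: "real vec" assume c: "c \<in> carrier_vec i"
    define y where "y = X *\<^sub>v c"
    have y: "y \<in> carrier_vec n" unfolding y_def using X c by simp
    have zE: "U\<^sup>T *\<^sub>v y = E *\<^sub>v c" unfolding y_def X_def using U E c UTU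
      by (simp add: assoc_mult_mat_vec[of _ n n _ i] assoc_mult_mat_vec[symmetric, of _ n n _ n])
    have cc: "y \<bullet> y = c \<bullet> c" unfolding y_def by (rule isometry_norm[OF X XTX c])
    have "ds ! (i - 1) * (y \<bullet> y) = (\<Sum>j<n. ds ! (i - 1) * ((E *\<^sub>v c) $ j)^2)"
      unfolding quad_form_spec(2)[OF sp y] zE by (simp add: sum_distrib_left)
    also have "\<dots> \<le> (\<Sum>j<n. ds ! j * ((E *\<^sub>v c) $ j)^2)"
    proof (rule sum_mono)
      fix j assume "j \<in> {..<n}"
      hence j: "j < n" by simp
      show "ds ! (i - 1) * ((E *\<^sub>v c) $ j)^2 \<le> ds ! j * ((E *\<^sub>v c) $ j)^2"
      proof (cases "j < i")
        case False thus ?thesis using Ec[OF c j] by simp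
      next
        case True
        hence "ds ! j \<ge> ds ! (i - 1)"
          using sorted j len i1 \<open>i \<le> n\<close> by (cases "j = i - 1", auto simp: sorted_wrt_iff_nth_less)
        thus ?thesis by (simp add: mult_right_mono)
      qed
    qed
    also have "\<dots> = y \<bullet> (A *\<^sub>v y)" unfolding quad_form_spec(1)[OF sp y] zE ..
    finally show "ds ! (i - 1) * (c \<bullet> c) \<le> (X *\<^sub>v c) \<bullet> (A *\<^sub>v (X *\<^sub>v c))" unfolding cc unfolding y_def .
  qed
  thus ?thesis using X XTX by blast
qed
lemma eig_mono:
  fixes M1 M2 Q :: "real mat"
  assumes M1: "M1 \<in> carrier_mat n n" and s1: "M1\<^sup>T = M1"
    and M2: "M2 \<in> carrier_mat k k" and s2: "M2\<^sup>T = M2"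
    and Q: "Q \<in> carrier_mat n k" and QTQ: "Q\<^sup>T * Q = 1\<^sub>m k" and kn: "k \<le> n"
    and i1: "1 \<le> i" and ik: "i \<le> k"
    and le: "\<forall>x \<in> carrier_vec k. x \<bullet> (M2 *\<^sub>v x) \<le> (Q *\<^sub>v x) \<bullet> (M1 *\<^sub>v (Q *\<^sub>v x))"
  shows "eigval M2 i \<le> eigval M1 i"
proof -
  obtain U1 ds1 where sp1: "spec M1 n U1 ds1" using spec_exists[OF M1 s1] by blast
  obtain U2 ds2 where sp2: "spec M2 k U2 ds2" using spec_exists[OF M2 s2] by blast
  obtain X where X: "X \<in> carrier_mat k i" and XTX: "X\<^sup>T * X = 1\<^sub>m i"
    and hX: "\<forall>c \<in> carrier_vec i. ds2 ! (i - 1) * (c \<bullet> c) \<le> (X *\<^sub>v c) \<bullet> (M2 *\<^sub>v (X *\<^sub>v c))"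
    using cf_down[OF sp2 i1 ik] by blast
  define Y where "Y = Q * X"
  have Y: "Y \<in> carrier_mat n i" unfolding Y_def using Q X by simp
  have YTY: "Y\<^sup>T * Y = 1\<^sub>m i"
  proof -
    have "Y\<^sup>T * Y = X\<^sup>T * Q\<^sup>T * (Q * X)" unfolding Y_def using transpose_mult[OF Q X] by simp
    also have "\<dots> = X\<^sup>T * (Q\<^sup>T * (Q * X))" by (rule assoc_mult_mat[of _ i k _ n _ i], insert Q X, auto)
    also have "Q\<^sup>T * (Q * X) = (Q\<^sup>T * Q) * X" by (rule assoc_mult_mat[symmetric, of _ k n _ k _ i], insert Q X, auto)
    finally show ?thesis unfolding QTQ using X XTX by simp
  qed
  have "\<forall>c \<in> carrier_vec i. ds2 ! (i - 1) * (c \<bullet> c) \<le> (Y *\<^sub>v c) \<bullet> (M1 *\<^sub>v (Y *\<^sub>v c))"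
  proof
    fix c :: "real vec" assume c: "c \<in> carrier_vec i"
    have Yc: "Y *\<^sub>v c = Q *\<^sub>v (X *\<^sub>v c)" unfolding Y_def using Q X c by simp
    have "X *\<^sub>v c \<in> carrier_vec k" using X c by simp
    thus "ds2 ! (i - 1) * (c \<bullet> c) \<le> (Y *\<^sub>v c) \<bullet> (M1 *\<^sub>v (Y *\<^sub>v c))"
      unfolding Yc using hX c le by (meson order_trans)
  qed
  from cf_up[OF sp1 Y YTY i1 _ this] kn ik have "ds2 ! (i - 1) \<le> ds1 ! (i - 1)" by simp
  thus ?thesis using spec_eigval[OF M1 sp1] spec_eigval[OF M2 sp2] by simp
qed

lemma spec_psd_nonneg:
  assumes sp: "spec A n U ds" and psd: "\<forall>x \<in> carrier_vec n. x \<bullet> (A *\<^sub>v x) \<ge> 0" and j: "j < n"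
  shows "ds ! j \<ge> 0"
proof -
  from sp have U: "U \<in> carrier_mat n n" and UTU: "U\<^sup>T * U = 1\<^sub>m n" unfolding spec_def by auto
  define x where "x = U *\<^sub>v unit_vec n j"
  have x: "x \<in> carrier_vec n" unfolding x_def using U by simp
  have ux: "U\<^sup>T *\<^sub>v x = unit_vec n j" unfolding x_def using U UTU
    by (simp add: assoc_mult_mat_vec[symmetric, of _ n n _ n])
  have "x \<bullet> (A *\<^sub>v x) = (\<Sum>l<n. ds ! l * ((unit_vec n j) $ l)^2)"
    unfolding quad_form_spec(1)[OF sp x] ux ..
  also have "\<dots> = ds ! j"
    by (subst sum.mono_neutral_cong_right[of _ "{j}"], insert j, auto)
  finally show ?thesis using psd x by metis
qed

lemma spec_square:
  assumes sp: "spec A n U ds" and nn: "\<forall>d \<in> set ds. d \<ge> 0"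
  shows "spec (A * A) n U (map (\<lambda>d. d^2) ds)"
proof -
  from sp have U: "U \<in> carrier_mat n n" and UTU: "U\<^sup>T * U = 1\<^sub>m n" and UUT: "U * U\<^sup>T = 1\<^sub>m n"
    and len: "length ds = n" and sorted: "sorted_wrt (\<ge>) ds" and A: "A = U * diag_m ds * U\<^sup>T"
    unfolding spec_def by auto
  have D: "diag_m ds \<in> carrier_mat n n" using len diag_m_carrier[of ds] by simp
  have DD: "diag_m ds * diag_m ds = diag_m (map (\<lambda>d. d^2) ds)"
  proof (rule eq_matI)
    fix a b assume "a < dim_row (diag_m (map (\<lambda>d. d^2) ds))" "b < dim_col (diag_m (map (\<lambda>d. d^2) ds))"
    hence a: "a < length ds" and b: "b < length ds" unfolding diag_m_def by auto
    show "(diag_m ds * diag_m ds) $$ (a, b) = diag_m (map (\<lambda>d. d^2) ds) $$ (a, b)"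
      using mult_diag_m_entry[OF diag_m_carrier a b] a b
      by (simp add: diag_m_def power2_eq_square)
  qed (auto simp: diag_m_def)
  have "A * A = U * (diag_m ds * (U\<^sup>T * U) * diag_m ds) * U\<^sup>T" unfolding A using U D
    by (simp add: assoc_mult_mat[of _ n n _ n _ n])
  also have "\<dots> = U * diag_m (map (\<lambda>d. d^2) ds) * U\<^sup>T" unfolding UTU DD[symmetric] using D U
    by (simp add: assoc_mult_mat[of _ n n _ n _ n])
  finally have eq: "A * A = U * diag_m (map (\<lambda>d. d^2) ds) * U\<^sup>T" .
  have "sorted_wrt (\<ge>) (map (\<lambda>d. d^2) ds)" unfolding sorted_wrt_map
    by (rule sorted_wrt_mono_rel[OF _ sorted], insert nn, auto intro: power_mono)
  thus ?thesis unfolding spec_def using U UTU UUT len eq by simp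
qed

lemma eigval_square:
  fixes A :: "real mat"
  assumes A: "A \<in> carrier_mat n n" and sym: "A\<^sup>T = A"
    and psd: "\<forall>x \<in> carrier_vec n. x \<bullet> (A *\<^sub>v x) \<ge> 0" and i1: "1 \<le> i" and i: "i \<le> n"
  shows "eigval (A * A) i = (eigval A i)^2" and "eigval A i \<ge> 0"
proof -
  obtain U ds where sp: "spec A n U ds" using spec_exists[OF A sym] by blast
  have len: "length ds = n" using sp unfolding spec_def by simp
  have nn: "\<forall>d \<in> set ds. d \<ge> 0" using spec_psd_nonneg[OF sp psd] len by (auto simp: in_set_conv_nth)
  have AA: "A * A \<in> carrier_mat n n" using A by simp
  show "eigval (A * A) i = (eigval A i)^2"
    using spec_eigval[OF AA spec_square[OF sp nn]] spec_eigval[OF A sp] len i1 i by simp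
  show "eigval A i \<ge> 0" using spec_eigval[OF A sp] spec_psd_nonneg[OF sp psd, of "i - 1"] i1 i by simp
qed
lemma pinv_unique:
  fixes M X Y :: "real mat"
  assumes M: "M \<in> carrier_mat m n" and X: "X \<in> carrier_mat n m" and Y: "Y \<in> carrier_mat n m"
    and x1: "M * X * M = M" and x2: "X * M * X = X" and x3: "(M * X)\<^sup>T = M * X" and x4: "(X * M)\<^sup>T = X * M"
    and y1: "M * Y * M = M" and y2: "Y * M * Y = Y" and y3: "(M * Y)\<^sup>T = M * Y" and y4: "(Y * M)\<^sup>T = Y * M"
  shows "X = Y"
proof -
  have Tc: "M\<^sup>T \<in> carrier_mat n m" "X\<^sup>T \<in> carrier_mat m n" "Y\<^sup>T \<in> carrier_mat m n" using M X Y by auto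
  have tMX: "(M * X)\<^sup>T = X\<^sup>T * M\<^sup>T" using transpose_mult[OF M X] .
  have tMY: "(M * Y)\<^sup>T = Y\<^sup>T * M\<^sup>T" using transpose_mult[OF M Y] .
  have tXM: "(X * M)\<^sup>T = M\<^sup>T * X\<^sup>T" using transpose_mult[OF X M] .
  have tYM: "(Y * M)\<^sup>T = M\<^sup>T * Y\<^sup>T" using transpose_mult[OF Y M] .
  have MT: "M\<^sup>T = M\<^sup>T * Y\<^sup>T * M\<^sup>T"
  proof -
    have "M\<^sup>T = (M * Y * M)\<^sup>T" using y1 by simp
    also have "\<dots> = M\<^sup>T * (M * Y)\<^sup>T" using transpose_mult[of "M * Y" m m M n] M Y by simp
    also have "\<dots> = M\<^sup>T * Y\<^sup>T * M\<^sup>T" unfolding tMY using M Y Tc by simp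
    finally show ?thesis .
  qed
  have MT': "M\<^sup>T = M\<^sup>T * X\<^sup>T * M\<^sup>T"
  proof -
    have "M\<^sup>T = (M * X * M)\<^sup>T" using x1 by simp
    also have "\<dots> = M\<^sup>T * (M * X)\<^sup>T" using transpose_mult[of "M * X" m m M n] M X by simp
    also have "\<dots> = M\<^sup>T * X\<^sup>T * M\<^sup>T" unfolding tMX using M X Tc by simp
    finally show ?thesis .
  qed
  have "X = X * (M * X)" using x2 M X by simp
  also have "\<dots> = X * (X\<^sup>T * M\<^sup>T)" by (simp only: tMX[unfolded x3])
  also have "\<dots> = X * (X\<^sup>T * (M\<^sup>T * Y\<^sup>T * M\<^sup>T))" by (rule arg_cong[OF MT, of "\<lambda>Z. X * (X\<^sup>T * Z)"])
  also have "\<dots> = X * ((M * X)\<^sup>T * (M * Y)\<^sup>T)" unfolding tMX tMY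
    by (subst assoc_mult_mat[of "X\<^sup>T" m n "M\<^sup>T" m _ m], insert M X Y, auto simp: assoc_mult_mat[of "M\<^sup>T" n m "Y\<^sup>T" n "M\<^sup>T" m])
  also have "\<dots> = X * ((M * X) * (M * Y))" unfolding x3 y3 ..
  also have "\<dots> = (X * (M * X)) * (M * Y)" by (rule assoc_mult_mat[symmetric, of X n m _ m _ m], insert M X Y, auto)
  also have "X * (M * X) = X * M * X" by (rule assoc_mult_mat[symmetric, of X n m M n X m], insert M X Y, auto)
  also have "X * M * X * (M * Y) = X * M * Y" unfolding x2
    by (rule assoc_mult_mat[symmetric, of X n m M n Y m], insert M X Y, auto)
  finally have X1: "X = X * M * Y" .
  have "Y = (Y * M) * Y" using y2 by simp
  also have "\<dots> = (M\<^sup>T * Y\<^sup>T) * Y" by (simp only: tYM[unfolded y4])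
  also have "\<dots> = ((M\<^sup>T * X\<^sup>T * M\<^sup>T) * Y\<^sup>T) * Y" by (rule arg_cong[OF MT', of "\<lambda>Z. (Z * Y\<^sup>T) * Y"])
  also have "\<dots> = ((X * M)\<^sup>T * (Y * M)\<^sup>T) * Y" unfolding tXM tYM
    by (subst assoc_mult_mat[of "M\<^sup>T * X\<^sup>T" n n "M\<^sup>T" m "Y\<^sup>T" n], insert M X Y, auto simp: assoc_mult_mat[of "M\<^sup>T" n m "X\<^sup>T" n "M\<^sup>T" m])
  also have "\<dots> = ((X * M) * (Y * M)) * Y" unfolding x4 y4 ..
  also have "\<dots> = (X * M) * ((Y * M) * Y)" by (rule assoc_mult_mat[of _ n n _ n Y m], insert M X Y, auto)
  also have "\<dots> = X * M * Y" unfolding y2 ..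
  finally have Y1: "Y = X * M * Y" .
  show ?thesis using X1 Y1 by simp
qed
lemma sandwich_mult:
  fixes U D1 D2 :: "real mat"
  assumes U: "U \<in> carrier_mat n n" and UTU: "U\<^sup>T * U = 1\<^sub>m n"
    and D1: "D1 \<in> carrier_mat n n" and D2: "D2 \<in> carrier_mat n n"
  shows "(U * D1 * U\<^sup>T) * (U * D2 * U\<^sup>T) = U * (D1 * D2) * U\<^sup>T"
proof -
  have "(U * D1 * U\<^sup>T) * (U * D2 * U\<^sup>T) = U * (D1 * (U\<^sup>T * U) * D2) * U\<^sup>T"
    using U D1 D2 by (simp add: assoc_mult_mat[of _ n n _ n _ n])
  thus ?thesis unfolding UTU using D1 D2 by simp
qed

lemma diag_m_mult:
  assumes len: "length b = length a"
  shows "diag_m a * diag_m b = diag_m (map (\<lambda>j. a ! j * b ! j) [0..<length a])"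
proof (rule eq_matI)
  fix i j assume "i < dim_row (diag_m (map (\<lambda>j. a ! j * b ! j) [0..<length a]))"
    "j < dim_col (diag_m (map (\<lambda>j. a ! j * b ! j) [0..<length a]))"
  hence i: "i < length a" and j: "j < length a" unfolding diag_m_def by auto
  have "(diag_m a * diag_m b) $$ (i, j) = diag_m a $$ (i, j) * b ! j"
    using mult_diag_m_entry[of "diag_m a" "length a" b i j] len i j by simp
  thus "(diag_m a * diag_m b) $$ (i, j) = diag_m (map (\<lambda>j. a ! j * b ! j) [0..<length a]) $$ (i, j)"
    using i j unfolding diag_m_def by simp
qed (insert len, auto simp: diag_m_def)

lemma pinv_spec:
  assumes B: "B \<in> carrier_mat k k" and sp: "spec B k U ds"
  shows "pinv B = U * diag_m (map (\<lambda>d. 1 / d) ds) * U\<^sup>T \<and> B * pinv B * B = B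
    \<and> pinv B * B * pinv B = pinv B \<and> (pinv B)\<^sup>T = pinv B"
proof -
  from sp have U: "U \<in> carrier_mat k k" and UTU: "U\<^sup>T * U = 1\<^sub>m k"
    and len: "length ds = k" and Beq: "B = U * diag_m ds * U\<^sup>T" unfolding spec_def by auto
  define D where "D = diag_m ds"
  define D' where "D' = diag_m (map (\<lambda>d. 1 / d) ds)"
  define X where "X = U * D' * U\<^sup>T"
  have D: "D \<in> carrier_mat k k" unfolding D_def using len diag_m_carrier[of ds] by simp
  have D': "D' \<in> carrier_mat k k" unfolding D'_def using len diag_m_carrier[of "map (\<lambda>d. 1 / d) ds"] by simp
  have X: "X \<in> carrier_mat k k" unfolding X_def using U D' by simp
  define e where "e = map (\<lambda>j. ds ! j * (map (\<lambda>d. 1 / d) ds) ! j) [0..<length ds]"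
  define e' where "e' = map (\<lambda>j. (map (\<lambda>d. 1 / d) ds) ! j * ds ! j) [0..<length (map (\<lambda>d. 1 / d) ds)]"
  have DD': "D * D' = diag_m e" unfolding D_def D'_def e_def by (rule diag_m_mult, simp)
  have D'D: "D' * D = diag_m e'" unfolding D_def D'_def e'_def by (rule diag_m_mult, simp)
  have DD'D: "D * D' * D = D"
  proof -
    have "D * D' * D = diag_m e * diag_m ds" unfolding DD' unfolding D_def ..
    also have "\<dots> = diag_m (map (\<lambda>j. e ! j * ds ! j) [0..<length e])"
      by (rule diag_m_mult, simp add: e_def)
    also have "\<dots> = D" unfolding D_def
      by (rule arg_cong[of _ _ diag_m], rule nth_equalityI, auto simp: e_def)
    finally show ?thesis .
  qed
  have D'DD': "D' * D * D' = D'"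
  proof -
    have "D' * D * D' = diag_m e' * diag_m (map (\<lambda>d. 1 / d) ds)" unfolding D'D unfolding D'_def ..
    also have "\<dots> = diag_m (map (\<lambda>j. e' ! j * (map (\<lambda>d. 1 / d) ds) ! j) [0..<length e'])"
      by (rule diag_m_mult, simp add: e'_def)
    also have "\<dots> = D'" unfolding D'_def
      by (rule arg_cong[of _ _ diag_m], rule nth_equalityI, auto simp: e'_def)
    finally show ?thesis .
  qed
  have BX: "B * X = U * (D * D') * U\<^sup>T" unfolding Beq X_def D_def[symmetric]
    by (rule sandwich_mult[OF U UTU D D'])
  have XB: "X * B = U * (D' * D) * U\<^sup>T" unfolding Beq X_def D_def[symmetric]
    by (rule sandwich_mult[OF U UTU D' D])
  have BD: "B = U * D * U\<^sup>T" unfolding D_def by (rule Beq)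
  have c1: "B * X * B = B"
  proof -
    have "B * X * B = (U * (D * D') * U\<^sup>T) * (U * D * U\<^sup>T)" unfolding BX by (subst BD, rule refl)
    also have "\<dots> = U * (D * D' * D) * U\<^sup>T" by (rule sandwich_mult[OF U UTU], insert D D', auto)
    also have "\<dots> = B" unfolding DD'D BD ..
    finally show ?thesis .
  qed
  have c2: "X * B * X = X"
  proof -
    have "X * B * X = (U * (D' * D) * U\<^sup>T) * (U * D' * U\<^sup>T)" unfolding XB by (subst X_def, rule refl)
    also have "\<dots> = U * (D' * D * D') * U\<^sup>T" by (rule sandwich_mult[OF U UTU], insert D D', auto)
    also have "\<dots> = X" unfolding D'DD' X_def ..
    finally show ?thesis .
  qed
  have c3: "(B * X)\<^sup>T = B * X" unfolding BX DD'
    by (rule transpose_sandwich'[OF _ _ U], insert len, auto simp: e_def diag_m_def)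
  have c4: "(X * B)\<^sup>T = X * B" unfolding XB D'D
    by (rule transpose_sandwich'[OF _ _ U], insert len, auto simp: e'_def diag_m_def)
  have "pinv B = X" unfolding pinv_def
  proof (rule the_equality)
    show "X \<in> carrier_mat (dim_col B) (dim_row B) \<and> B * X * B = B \<and> X * B * X = X \<and>
      (B * X)\<^sup>T = B * X \<and> (X * B)\<^sup>T = X * B" using X B c1 c2 c3 c4 by simp
  next
    fix Y assume "Y \<in> carrier_mat (dim_col B) (dim_row B) \<and> B * Y * B = B \<and> Y * B * Y = Y \<and>
      (B * Y)\<^sup>T = B * Y \<and> (Y * B)\<^sup>T = Y * B"
    thus "Y = X" using pinv_unique[OF B, of Y X] X B c1 c2 c3 c4 by auto
  qed
  moreover have "X\<^sup>T = X" unfolding X_def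
    by (rule transpose_sandwich'[OF D' _ U], unfold D'_def, simp)
  ultimately show ?thesis using c1 c2 unfolding X_def D'_def by simp
qed
lemma sym_form:
  fixes A :: "real mat"
  assumes A: "A \<in> carrier_mat n n" and sym: "A\<^sup>T = A" and x: "x \<in> carrier_vec n" and y: "y \<in> carrier_vec n"
  shows "x \<bullet> (A *\<^sub>v y) = y \<bullet> (A *\<^sub>v x)"
proof -
  have "(A\<^sup>T *\<^sub>v x) \<bullet> y = x \<bullet> (A *\<^sub>v y)" by (rule transpose_vec_mult_scalar[OF A y x])
  hence "x \<bullet> (A *\<^sub>v y) = (A *\<^sub>v x) \<bullet> y" using sym by simp
  also have "\<dots> = y \<bullet> (A *\<^sub>v x)" by (rule comm_scalar_prod[of _ n], insert A x y, auto)
  finally show ?thesis .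
qed

lemma tr_form:
  fixes C :: "real mat"
  assumes C: "C \<in> carrier_mat n k" and x: "x \<in> carrier_vec k" and y: "y \<in> carrier_vec n"
  shows "x \<bullet> (C\<^sup>T *\<^sub>v y) = (C *\<^sub>v x) \<bullet> y"
proof -
  have "x \<bullet> (C\<^sup>T *\<^sub>v y) = (C\<^sup>T *\<^sub>v y) \<bullet> x" by (rule comm_scalar_prod[of _ k], insert C x y, auto)
  also have "\<dots> = y \<bullet> (C *\<^sub>v x)" by (rule transpose_vec_mult_scalar[OF C x y])
  also have "\<dots> = (C *\<^sub>v x) \<bullet> y" by (rule comm_scalar_prod[of _ n], insert C x y, auto)
  finally show ?thesis .
qed

lemma psd_null:
  fixes A :: "real mat"
  assumes A: "A \<in> carrier_mat n n" and sym: "A\<^sup>T = A"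
    and psd: "\<forall>x \<in> carrier_vec n. x \<bullet> (A *\<^sub>v x) \<ge> 0"
    and x: "x \<in> carrier_vec n" and x0: "x \<bullet> (A *\<^sub>v x) = 0"
  shows "A *\<^sub>v x = 0\<^sub>v n"
proof -
  obtain U ds where sp: "spec A n U ds" using spec_exists[OF A sym] by blast
  from sp have U: "U \<in> carrier_mat n n" and len: "length ds = n" and Aeq: "A = U * diag_m ds * U\<^sup>T"
    unfolding spec_def by auto
  have nn: "\<And>j. j < n \<Longrightarrow> ds ! j \<ge> 0" using spec_psd_nonneg[OF sp psd] .
  define z where "z = U\<^sup>T *\<^sub>v x"
  have z: "z \<in> carrier_vec n" unfolding z_def using U x by simp
  have "(\<Sum>j<n. ds ! j * (z $ j)^2) = 0" using quad_form_spec(1)[OF sp x] x0 unfolding z_def by simp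
  hence "\<forall>j \<in> {..<n}. ds ! j * (z $ j)^2 = 0"
    by (subst (asm) sum_nonneg_eq_0_iff, insert nn, auto)
  hence dz: "\<And>j. j < n \<Longrightarrow> ds ! j * z $ j = 0" by (auto simp: power2_eq_square)
  have D: "diag_m ds \<in> carrier_mat n n" using len diag_m_carrier[of ds] by simp
  have Dz: "diag_m ds *\<^sub>v z = 0\<^sub>v n"
    by (rule eq_vecI, insert D z dz diag_m_mult_vec[of z ds] len, auto)
  have "A *\<^sub>v x = U *\<^sub>v (diag_m ds *\<^sub>v z)" unfolding Aeq z_def using U D x
    by (simp add: assoc_mult_mat_vec[of _ n n _ n])
  thus ?thesis unfolding Dz using U by (auto intro!: eq_vecI)
qed

lemma bessel:
  fixes Q :: "real mat"
  assumes Q: "Q \<in> carrier_mat n k" and QTQ: "Q\<^sup>T * Q = 1\<^sub>m k" and y: "y \<in> carrier_vec n"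
  shows "(Q\<^sup>T *\<^sub>v y) \<bullet> (Q\<^sup>T *\<^sub>v y) \<le> y \<bullet> y"
proof -
  define w where "w = Q\<^sup>T *\<^sub>v y"
  have w: "w \<in> carrier_vec k" unfolding w_def using Q y by simp
  have Qw: "Q *\<^sub>v w \<in> carrier_vec n" using Q w by simp
  have yQw: "y \<bullet> (Q *\<^sub>v w) = w \<bullet> w"
    using transpose_vec_mult_scalar[OF Q w y] unfolding w_def by simp
  have QwQw: "(Q *\<^sub>v w) \<bullet> (Q *\<^sub>v w) = w \<bullet> w" by (rule isometry_norm[OF Q QTQ w])
  have wy: "(Q *\<^sub>v w) \<bullet> y = w \<bullet> w" using yQw comm_scalar_prod[OF y Qw] by simp
  have "0 \<le> (y - Q *\<^sub>v w) \<bullet> (y - Q *\<^sub>v w)" by (rule conjugate_square_ge_0_vec[of "y - Q *\<^sub>v w", simplified])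
  also have "\<dots> = y \<bullet> y - y \<bullet> (Q *\<^sub>v w) - ((Q *\<^sub>v w) \<bullet> y - (Q *\<^sub>v w) \<bullet> (Q *\<^sub>v w))"
    using y Qw by (simp add: minus_scalar_prod_distrib[of _ n] scalar_prod_minus_distrib[of _ n])
  also have "\<dots> = y \<bullet> y - w \<bullet> w" unfolding yQw wy QwQw by simp
  finally show ?thesis unfolding w_def by simp
qed
lemma triple_mult_vec:
  assumes A: "A \<in> carrier_mat a b" and B: "B \<in> carrier_mat b c" and D: "D \<in> carrier_mat c d"
    and v: "v \<in> carrier_vec d"
  shows "(A * B * D) *\<^sub>v v = A *\<^sub>v (B *\<^sub>v (D *\<^sub>v v))"
proof -
  have "(A * B * D) *\<^sub>v v = (A * B) *\<^sub>v (D *\<^sub>v v)"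
    by (rule assoc_mult_mat_vec[of _ a c], insert A B D v, auto)
  also have "\<dots> = A *\<^sub>v (B *\<^sub>v (D *\<^sub>v v))"
    by (rule assoc_mult_mat_vec[of _ a b], insert A B D v, auto)
  finally show ?thesis .
qed

theorem theorem3p1:
  fixes A Q :: "real mat" and n k i :: nat
  assumes A_dim: "A \<in> carrier_mat n n"
    and A_sym: "A\<^sup>T = A"
    and A_psd: "\<forall>x \<in> carrier_vec n. x \<bullet> (A *\<^sub>v x) \<ge> 0"
    and Q_dim: "Q \<in> carrier_mat n k"
    and Q_orth: "Q\<^sup>T * Q = 1\<^sub>m k"
    and k_le_n: "k \<le> n"
    and i_ge: "1 \<le> i" and i_le: "i \<le> k"
  shows "eigval A i \<ge> eigval (nystrom A Q) i
       \<and> eigval (nystrom A Q) i \<ge> singval (A * Q) i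
       \<and> singval (A * Q) i \<ge> eigval (Q\<^sup>T * A * Q) i"
proof -
  note A = A_dim and Q = Q_dim
  define B where "B = Q\<^sup>T * A * Q"
  define C where "C = A * Q"
  define P where "P = pinv B"
  define N where "N = C * P * C\<^sup>T"
  have Nn: "nystrom A Q = N" unfolding nystrom_def N_def C_def P_def B_def ..
  have B: "B \<in> carrier_mat k k" unfolding B_def using A Q by simp
  have C: "C \<in> carrier_mat n k" unfolding C_def using A Q by simp
  have symB: "B\<^sup>T = B" unfolding B_def by (rule transpose_sandwich[OF A A_sym Q])
  have B2: "B = Q\<^sup>T * (A * Q)" unfolding B_def by (rule assoc_mult_mat[of _ k n _ n _ k], insert A Q, auto)
  have Bv: "\<And>x. x \<in> carrier_vec k \<Longrightarrow> B *\<^sub>v x = Q\<^sup>T *\<^sub>v (A *\<^sub>v (Q *\<^sub>v x))"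
  proof -
    fix x :: "real vec" assume x: "x \<in> carrier_vec k"
    have "B *\<^sub>v x = Q\<^sup>T *\<^sub>v ((A * Q) *\<^sub>v x)" unfolding B2
      by (rule assoc_mult_mat_vec[of _ k n _ k], insert A Q x, auto)
    thus "B *\<^sub>v x = Q\<^sup>T *\<^sub>v (A *\<^sub>v (Q *\<^sub>v x))" using A Q x by simp
  qed
  have Bv': "\<And>x. x \<in> carrier_vec k \<Longrightarrow> B *\<^sub>v x = Q\<^sup>T *\<^sub>v (C *\<^sub>v x)"
    unfolding C_def using Bv A Q by simp
  have Bform: "\<And>x. x \<in> carrier_vec k \<Longrightarrow> x \<bullet> (B *\<^sub>v x) = (Q *\<^sub>v x) \<bullet> (A *\<^sub>v (Q *\<^sub>v x))"
    unfolding Bv using A Q by (subst tr_form[OF Q], auto)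
  have psdB: "\<forall>x \<in> carrier_vec k. x \<bullet> (B *\<^sub>v x) \<ge> 0"
    using Bform A_psd Q by simp
  obtain UB ds where spB: "spec B k UB ds" using spec_exists[OF B symB] by blast
  from pinv_spec[OF B spB] have
    PBP: "P * B * P = P" and BPB: "B * P * B = B" and symP: "P\<^sup>T = P"
    and Peq: "P = UB * diag_m (map (\<lambda>d. 1 / d) ds) * UB\<^sup>T"
    unfolding P_def by auto
  have P: "P \<in> carrier_mat k k" unfolding Peq using spB unfolding spec_def
    using diag_m_carrier[of "map (\<lambda>d. 1 / d) ds"] by auto
  have N: "N \<in> carrier_mat n n" unfolding N_def using C P by simp
  have symN: "N\<^sup>T = N" unfolding N_def by (rule transpose_sandwich'[OF P symP C])
  have CTy: "\<And>y. y \<in> carrier_vec n \<Longrightarrow> C\<^sup>T *\<^sub>v y = Q\<^sup>T *\<^sub>v (A *\<^sub>v y)"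
  proof -
    fix y :: "real vec" assume y: "y \<in> carrier_vec n"
    have "C\<^sup>T = Q\<^sup>T * A" unfolding C_def using transpose_mult[OF A Q] A_sym by simp
    thus "C\<^sup>T *\<^sub>v y = Q\<^sup>T *\<^sub>v (A *\<^sub>v y)" using A Q y by simp
  qed
  have Nv: "\<And>y. y \<in> carrier_vec n \<Longrightarrow> N *\<^sub>v y = C *\<^sub>v (P *\<^sub>v (C\<^sup>T *\<^sub>v y))"
    unfolding N_def by (rule triple_mult_vec[OF C P], insert C, auto)
  have Nform: "\<And>y. y \<in> carrier_vec n \<Longrightarrow> y \<bullet> (N *\<^sub>v y) = (C\<^sup>T *\<^sub>v y) \<bullet> (P *\<^sub>v (C\<^sup>T *\<^sub>v y))"
  proof -
    fix y :: "real vec" assume y: "y \<in> carrier_vec n"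
    have "(C\<^sup>T *\<^sub>v y) \<bullet> (P *\<^sub>v (C\<^sup>T *\<^sub>v y)) = y \<bullet> (C *\<^sub>v (P *\<^sub>v (C\<^sup>T *\<^sub>v y)))"
      by (rule transpose_vec_mult_scalar[OF C], insert C P y, auto)
    thus "y \<bullet> (N *\<^sub>v y) = (C\<^sup>T *\<^sub>v y) \<bullet> (P *\<^sub>v (C\<^sup>T *\<^sub>v y))" using Nv[OF y] by simp
  qed
  have PBPv: "\<And>z. z \<in> carrier_vec k \<Longrightarrow> P *\<^sub>v (B *\<^sub>v (P *\<^sub>v z)) = P *\<^sub>v z"
    by (metis triple_mult_vec[OF P B P] PBP)
  have Pquad: "\<And>z. z \<in> carrier_vec k \<Longrightarrow> (P *\<^sub>v z) \<bullet> (B *\<^sub>v (P *\<^sub>v z)) = z \<bullet> (P *\<^sub>v z)"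
  proof -
    fix z :: "real vec" assume z: "z \<in> carrier_vec k"
    have Pz: "P *\<^sub>v z \<in> carrier_vec k" using P z by simp
    have BPz: "B *\<^sub>v (P *\<^sub>v z) \<in> carrier_vec k" using B P z by simp
    have "(P *\<^sub>v z) \<bullet> (B *\<^sub>v (P *\<^sub>v z)) = (B *\<^sub>v (P *\<^sub>v z)) \<bullet> (P *\<^sub>v z)"
      by (rule comm_scalar_prod[OF Pz BPz])
    also have "\<dots> = z \<bullet> (P *\<^sub>v (B *\<^sub>v (P *\<^sub>v z)))" by (rule sym_form[OF P symP BPz z])
    also have "\<dots> = z \<bullet> (P *\<^sub>v z)" using PBPv[OF z] by simp
    finally show "(P *\<^sub>v z) \<bullet> (B *\<^sub>v (P *\<^sub>v z)) = z \<bullet> (P *\<^sub>v z)" .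
  qed
  have psdP: "\<And>z. z \<in> carrier_vec k \<Longrightarrow> z \<bullet> (P *\<^sub>v z) \<ge> 0"
    using Pquad psdB P by (metis mult_mat_vec_carrier)
  have psdN: "\<forall>y \<in> carrier_vec n. y \<bullet> (N *\<^sub>v y) \<ge> 0"
    using Nform psdP C by simp
  have NQ: "\<And>x. x \<in> carrier_vec k \<Longrightarrow> N *\<^sub>v (Q *\<^sub>v x) = C *\<^sub>v x"
  proof -
    fix x :: "real vec" assume x: "x \<in> carrier_vec k"
    have CTQ: "C\<^sup>T *\<^sub>v (Q *\<^sub>v x) = B *\<^sub>v x" unfolding CTy[OF mult_mat_vec_carrier[OF Q x]] Bv[OF x] ..
    define t where "t = x - P *\<^sub>v (B *\<^sub>v x)"
    have t: "t \<in> carrier_vec k" unfolding t_def using x P B by simp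
    have "B *\<^sub>v t = B *\<^sub>v x - B *\<^sub>v (P *\<^sub>v (B *\<^sub>v x))" unfolding t_def
      by (rule mult_minus_distrib_mat_vec[OF B], insert x P B, auto)
    also have "B *\<^sub>v (P *\<^sub>v (B *\<^sub>v x)) = B *\<^sub>v x"
      by (metis triple_mult_vec[OF B P B] BPB x)
    finally have "B *\<^sub>v t = 0\<^sub>v k" using B x by simp
    hence "(Q *\<^sub>v t) \<bullet> (A *\<^sub>v (Q *\<^sub>v t)) = 0" using Bform[OF t] t by simp
    hence "A *\<^sub>v (Q *\<^sub>v t) = 0\<^sub>v n" using psd_null[OF A A_sym A_psd] Q t by simp
    hence Ct: "C *\<^sub>v t = 0\<^sub>v n" unfolding C_def using A Q t by simp
    have "C *\<^sub>v t = C *\<^sub>v x - C *\<^sub>v (P *\<^sub>v (B *\<^sub>v x))" unfolding t_def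
      by (rule mult_minus_distrib_mat_vec[OF C], insert x P B, auto)
    hence eq0: "C *\<^sub>v x - C *\<^sub>v (P *\<^sub>v (B *\<^sub>v x)) = 0\<^sub>v n" unfolding Ct by simp
    have "C *\<^sub>v x = C *\<^sub>v (P *\<^sub>v (B *\<^sub>v x))"
    proof (rule eq_vecI)
      fix j assume "j < dim_vec (C *\<^sub>v (P *\<^sub>v (B *\<^sub>v x)))"
      hence j: "j < n" using C by simp
      from arg_cong[OF eq0, of "\<lambda>v. v $ j"] show "(C *\<^sub>v x) $ j = (C *\<^sub>v (P *\<^sub>v (B *\<^sub>v x))) $ j"
        using j C by simp
    qed (insert C, simp)
    thus "N *\<^sub>v (Q *\<^sub>v x) = C *\<^sub>v x" using Nv[OF mult_mat_vec_carrier[OF Q x]] CTQ by simp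
  qed
  have AN: "\<forall>y \<in> carrier_vec n. y \<bullet> (N *\<^sub>v y) \<le> y \<bullet> (A *\<^sub>v y)"
  proof
    fix y :: "real vec" assume y: "y \<in> carrier_vec n"
    define z where "z = C\<^sup>T *\<^sub>v y"
    define w where "w = P *\<^sub>v z"
    define u where "u = Q *\<^sub>v w"
    have z: "z \<in> carrier_vec k" unfolding z_def using C y by simp
    have w: "w \<in> carrier_vec k" unfolding w_def using P z by simp
    have u: "u \<in> carrier_vec n" unfolding u_def using Q w by simp
    have Ay: "A *\<^sub>v y \<in> carrier_vec n" using A y by simp
    have Au: "A *\<^sub>v u \<in> carrier_vec n" using A u by simp
    have uAy: "u \<bullet> (A *\<^sub>v y) = z \<bullet> (P *\<^sub>v z)"
    proof -
      have "u \<bullet> (A *\<^sub>v y) = w \<bullet> (Q\<^sup>T *\<^sub>v (A *\<^sub>v y))" unfolding u_def by (rule tr_form[OF Q w Ay, symmetric])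
      also have "\<dots> = w \<bullet> z" unfolding z_def CTy[OF y] ..
      also have "\<dots> = z \<bullet> (P *\<^sub>v z)" unfolding w_def by (rule comm_scalar_prod[of _ k], insert P z, auto)
      finally show ?thesis .
    qed
    have uAu: "u \<bullet> (A *\<^sub>v u) = z \<bullet> (P *\<^sub>v z)"
    proof -
      have "u \<bullet> (A *\<^sub>v u) = w \<bullet> (B *\<^sub>v w)" using Bform[OF w] unfolding u_def by simp
      also have "\<dots> = z \<bullet> (P *\<^sub>v z)" unfolding w_def by (rule Pquad[OF z])
      finally show ?thesis .
    qed
    have yAu: "y \<bullet> (A *\<^sub>v u) = u \<bullet> (A *\<^sub>v y)" by (rule sym_form[OF A A_sym y u])
    have "0 \<le> (y - u) \<bullet> (A *\<^sub>v (y - u))" using A_psd y u by simp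
    also have "A *\<^sub>v (y - u) = A *\<^sub>v y - A *\<^sub>v u" by (rule mult_minus_distrib_mat_vec[OF A y u])
    also have "(y - u) \<bullet> (A *\<^sub>v y - A *\<^sub>v u) = y \<bullet> (A *\<^sub>v y) - y \<bullet> (A *\<^sub>v u) - (u \<bullet> (A *\<^sub>v y) - u \<bullet> (A *\<^sub>v u))"
      using y u Ay Au by (simp add: minus_scalar_prod_distrib[of _ n] scalar_prod_minus_distrib[of _ n])
    also have "\<dots> = y \<bullet> (A *\<^sub>v y) - z \<bullet> (P *\<^sub>v z)" unfolding yAu uAy uAu by simp
    finally show "y \<bullet> (N *\<^sub>v y) \<le> y \<bullet> (A *\<^sub>v y)" unfolding Nform[OF y] z_def by simp
  qed
  have part1: "eigval N i \<le> eigval A i"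
    by (rule eig_mono[OF A A_sym N symN, of "1\<^sub>m n"], insert AN i_ge i_le k_le_n, auto)
  define G where "G = C\<^sup>T * C"
  have G: "G \<in> carrier_mat k k" unfolding G_def using C by simp
  have symG: "G\<^sup>T = G" unfolding G_def using transpose_mult[of "C\<^sup>T" k n C k] C by simp
  have Gform: "\<And>x. x \<in> carrier_vec k \<Longrightarrow> x \<bullet> (G *\<^sub>v x) = (C *\<^sub>v x) \<bullet> (C *\<^sub>v x)"
  proof -
    fix x :: "real vec" assume x: "x \<in> carrier_vec k"
    have "G *\<^sub>v x = C\<^sup>T *\<^sub>v (C *\<^sub>v x)" unfolding G_def using C x by simp
    thus "x \<bullet> (G *\<^sub>v x) = (C *\<^sub>v x) \<bullet> (C *\<^sub>v x)" using tr_form[OF C x, of "C *\<^sub>v x"] C x by simp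
  qed
  have NN: "N * N \<in> carrier_mat n n" using N by simp
  have symNN: "(N * N)\<^sup>T = N * N" using transpose_mult[OF N N] symN by simp
  have "eigval G i \<le> eigval (N * N) i"
  proof (rule eig_mono[OF NN symNN G symG Q Q_orth k_le_n i_ge i_le], rule ballI)
    fix x :: "real vec" assume x: "x \<in> carrier_vec k"
    have Qx: "Q *\<^sub>v x \<in> carrier_vec n" using Q x by simp
    have Cx: "C *\<^sub>v x \<in> carrier_vec n" using C x by simp
    have "(Q *\<^sub>v x) \<bullet> ((N * N) *\<^sub>v (Q *\<^sub>v x)) = (Q *\<^sub>v x) \<bullet> (N *\<^sub>v (C *\<^sub>v x))"
      using N Qx NQ[OF x] by simp
    also have "\<dots> = (C *\<^sub>v x) \<bullet> (N *\<^sub>v (Q *\<^sub>v x))" by (rule sym_form[OF N symN Qx Cx])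
    also have "\<dots> = x \<bullet> (G *\<^sub>v x)" unfolding NQ[OF x] Gform[OF x] ..
    finally show "x \<bullet> (G *\<^sub>v x) \<le> (Q *\<^sub>v x) \<bullet> ((N * N) *\<^sub>v (Q *\<^sub>v x))" by simp
  qed
  also have "eigval (N * N) i = (eigval N i)^2" using eigval_square(1)[OF N symN psdN i_ge] i_le k_le_n by simp
  finally have G_le: "eigval G i \<le> (eigval N i)^2" .
  have Nnn: "eigval N i \<ge> 0" using eigval_square(2)[OF N symN psdN i_ge] i_le k_le_n by simp
  have sv: "singval (A * Q) i = sqrt (eigval G i)" unfolding singval_def G_def C_def ..
  have part2: "singval (A * Q) i \<le> eigval N i"
    unfolding sv using G_le Nnn by (metis real_sqrt_abs real_sqrt_le_mono abs_of_nonneg)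
  have BB: "B * B \<in> carrier_mat k k" using B by simp
  have symBB: "(B * B)\<^sup>T = B * B" using transpose_mult[OF B B] symB by simp
  have "eigval (B * B) i \<le> eigval G i"
  proof (rule eig_mono[OF G symG BB symBB, of "1\<^sub>m k"], insert i_ge i_le, auto, goal_cases)
    case (1 x)
    have x: "x \<in> carrier_vec k" by fact
    have Bx: "B *\<^sub>v x \<in> carrier_vec k" using B x by simp
    have "x \<bullet> ((B * B) *\<^sub>v x) = x \<bullet> (B *\<^sub>v (B *\<^sub>v x))" using B x by simp
    also have "\<dots> = (B *\<^sub>v x) \<bullet> (B *\<^sub>v x)" by (rule sym_form[OF B symB x Bx])
    also have "\<dots> \<le> (C *\<^sub>v x) \<bullet> (C *\<^sub>v x)" unfolding Bv'[OF x]
      by (rule bessel[OF Q Q_orth], insert C x, simp)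
    also have "\<dots> = x \<bullet> (G *\<^sub>v x)" using Gform[OF x] by simp
    finally show ?case by simp
  qed
  also have "eigval (B * B) i = (eigval B i)^2" using eigval_square(1)[OF B symB psdB i_ge i_le] by simp
  finally have B_le: "(eigval B i)^2 \<le> eigval G i" .
  have Bnn: "eigval B i \<ge> 0" using eigval_square(2)[OF B symB psdB i_ge i_le] .
  have part3: "eigval B i \<le> singval (A * Q) i"
    unfolding sv using B_le Bnn by (metis real_sqrt_abs real_sqrt_le_mono abs_of_nonneg)
  show ?thesis unfolding Nn using part1 part2 part3 unfolding B_def by simp
qed

end
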